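(* Let $X$ be a normal topological space in which every $\Lambda$-set is open, and let $g,f:X\to\mathbb{R}$ be functions such that $f$ is lower semi-contra-continuous, $g$ is upper semi-contra-continuous, and $f\le g$. Then there exists a contra-continuous function $h:X\to\mathbb{R}$ such that $f\le h\le g$.
   Context: A $\Lambda$-set in $X$ is an intersection of open sets. A function $f:X\to\mathbb{R}$ is upper semi-contra-continuous (resp. lower semi-contra-continuous) if $f^{-1}(-\infty,t)$ (resp. $f^{-1}(t,+\infty)$) is closed in $X$ for every real $t$. A function $h:X\to\mathbb{R}$ is contra-continuous if the preimage of every open subset of $\mathbb{R}$ is closed in $X$. $f\le g$ means $f(x)\le g(x)$ for all $x\in X$. *)

theory Defs
  imports "HOL-Analysis.Analysis"
begin

definition lambda_set :: "'a topology \<Rightarrow> 'a set \<Rightarrow> bool" where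
  "lambda_set X A \<longleftrightarrow> (\<exists>\<U>. (\<forall>U\<in>\<U>. openin X U) \<and> A = topspace X \<inter> \<Inter>\<U>)"

definition upper_semi_contra_continuous :: "'a topology \<Rightarrow> ('a \<Rightarrow> real) \<Rightarrow> bool" where
  "upper_semi_contra_continuous X f \<longleftrightarrow>
     (\<forall>t::real. closedin X {x \<in> topspace X. f x < t})"

definition lower_semi_contra_continuous :: "'a topology \<Rightarrow> ('a \<Rightarrow> real) \<Rightarrow> bool" where
  "lower_semi_contra_continuous X f \<longleftrightarrow>
     (\<forall>t::real. closedin X {x \<in> topspace X. t < f x})"

definition contra_continuous :: "'a topology \<Rightarrow> ('a \<Rightarrow> real) \<Rightarrow> bool" where
  "contra_continuous X h \<longleftrightarrow>
     (\<forall>U::real set. open U \<longrightarrow> closedin X {x \<in> topspace X. h x \<in> U})"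

end

theory Submission
  imports Defs
begin

theorem corollary2:
  fixes X :: "'a topology" and f g :: "'a \<Rightarrow> real"
  assumes "normal_space X"
    and "\<And>A. lambda_set X A \<Longrightarrow> openin X A"
    and "lower_semi_contra_continuous X f"
    and "upper_semi_contra_continuous X g"
    and "\<And>x. x \<in> topspace X \<Longrightarrow> f x \<le> g x"
  shows "\<exists>h. contra_continuous X h \<and>
           (\<forall>x\<in>topspace X. f x \<le> h x \<and> h x \<le> g x)"
proof -
  define le where "le w x \<longleftrightarrow> w \<in> topspace X \<and> x \<in> topspace X \<and>
     (\<forall>U. openin X U \<and> w \<in> U \<longrightarrow> x \<in> U)" for w x
  define R where "R x y \<longleftrightarrow> (\<exists>w. le w x \<and> le w y)" for x y
  define E where "E x = {y. R x y}" for x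
  define h where "h x = Sup (f ` E x)" for x
  have letr: "le a c" if "le a b" "le b c" for a b c
    using that unfolding le_def by blast
  have fle: "f x \<le> f w" if "le w x" for w x
  proof (rule ccontr)
    assume "\<not> f x \<le> f w"
    have "closedin X {z \<in> topspace X. f w < f z}"
      using assms(3) unfolding lower_semi_contra_continuous_def by blast
    then have "openin X (topspace X - {z \<in> topspace X. f w < f z})"
      by (simp add: closedin_def)
    moreover have "w \<in> topspace X - {z \<in> topspace X. f w < f z}" using that le_def by auto
    ultimately have "x \<in> topspace X - {z \<in> topspace X. f w < f z}"
      using that unfolding le_def by blast
    then show False using \<open>\<not> f x \<le> f w\<close> by auto
  qed
  have gle: "g w \<le> g x" if "le w x" for w x
  proof (rule ccontr)
    assume "\<not> g w \<le> g x"
    have "closedin X {z \<in> topspace X. g z < g w}"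
      using assms(4) unfolding upper_semi_contra_continuous_def by blast
    then have "openin X (topspace X - {z \<in> topspace X. g z < g w})"
      by (simp add: closedin_def)
    moreover have "w \<in> topspace X - {z \<in> topspace X. g z < g w}" using that le_def by auto
    ultimately have "x \<in> topspace X - {z \<in> topspace X. g z < g w}"
      using that unfolding le_def by blast
    then show False using \<open>\<not> g w \<le> g x\<close> by auto
  qed
  have cl: "u \<in> X closure_of {w} \<longleftrightarrow> le u w" if "w \<in> topspace X" for u w
    using that unfolding le_def in_closure_of by (simp, blast)
  have lower: "\<exists>u. le u a \<and> le u b" if "le a y" "le b y" for a b y
  proof (rule ccontr)
    assume nu: "\<not> (\<exists>u. le u a \<and> le u b)"
    have at: "a \<in> topspace X" "b \<in> topspace X" using that le_def by auto
    have "disjnt (X closure_of {a}) (X closure_of {b})"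
      unfolding disjnt_def using nu by (auto simp: cl at)
    note dis = this
    have nd: "closedin X (X closure_of {a}) \<and> closedin X (X closure_of {b}) \<and> disjnt (X closure_of {a}) (X closure_of {b})
       \<longrightarrow> (\<exists>U V. openin X U \<and> openin X V \<and> X closure_of {a} \<subseteq> U \<and> X closure_of {b} \<subseteq> V \<and> disjnt U V)"
      by (rule assms(1)[unfolded normal_space_def, THEN spec, THEN spec])
    have "\<exists>U V. openin X U \<and> openin X V \<and> X closure_of {a} \<subseteq> U \<and> X closure_of {b} \<subseteq> V \<and> disjnt U V"
      using mp[OF nd] dis closedin_closure_of by simp
    then obtain U V where UV: "openin X U" "openin X V" "X closure_of {a} \<subseteq> U"
      "X closure_of {b} \<subseteq> V" "disjnt U V"
      by blast
    have "le a a" "le b b" using at unfolding le_def by auto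
    then have "a \<in> X closure_of {a}" "b \<in> X closure_of {b}" using cl at by auto
    then have "a \<in> U" "b \<in> V" using UV(3,4) by auto
    moreover have "\<forall>U. openin X U \<and> a \<in> U \<longrightarrow> y \<in> U" "\<forall>U. openin X U \<and> b \<in> U \<longrightarrow> y \<in> U"
      using that unfolding le_def by auto
    ultimately have "y \<in> U" "y \<in> V" using UV(1,2) by auto
    then show False using UV(5) unfolding disjnt_def by blast
  qed
  have Rtr: "R x z" if xy: "R x y" and yz: "R y z" for x y z
  proof -
    obtain w where w: "le w x" "le w y" using xy unfolding R_def by blast
    obtain v where v: "le v y" "le v z" using yz unfolding R_def by blast
    obtain u where u: "le u w" "le u v" using lower[OF w(2) v(1)] by blast
    show ?thesis unfolding R_def using letr[OF u(1) w(1)] letr[OF u(2) v(2)] by blast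
  qed
  have Rsym: "R x y \<Longrightarrow> R y x" for x y unfolding R_def by blast
  have Rrefl: "x \<in> topspace X \<Longrightarrow> R x x" for x unfolding R_def le_def by auto
  have Eeq: "E x = E z" if "R x z" for x z
    using Rtr[OF Rsym[OF that]] Rtr[OF that] unfolding E_def by auto
  have bnd: "f y \<le> g x" if "y \<in> E x" for x y
  proof -
    obtain w where w: "le w x" "le w y" using \<open>y \<in> E x\<close> unfolding E_def R_def by blast
    have "w \<in> topspace X" using w le_def by auto
    then have "f w \<le> g w" using assms(5) by blast
    moreover have "f y \<le> f w" using fle[OF w(2)] .
    moreover have "g w \<le> g x" using gle[OF w(1)] .
    ultimately show ?thesis by linarith
  qed
  have bounds: "f x \<le> h x \<and> h x \<le> g x" if "x \<in> topspace X" for x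
  proof
    have xE: "x \<in> E x" using Rrefl that E_def by blast
    have bdd: "bdd_above (f ` E x)" using bnd by (meson bdd_aboveI2)
    show "f x \<le> h x" unfolding h_def using xE bdd by (simp add: cSup_upper)
    show "h x \<le> g x" unfolding h_def using xE bnd by (intro cSup_least) auto
  qed
  have "contra_continuous X h"
    unfolding contra_continuous_def
  proof (intro allI impI)
    fix U :: "real set"
    let ?S = "{x \<in> topspace X. h x \<in> U}"
    have "openin X (topspace X - ?S)"
    proof (subst openin_subopen, intro ballI)
      fix x assume x: "x \<in> topspace X - ?S"
      define N where "N = topspace X \<inter> \<Inter>{V. openin X V \<and> x \<in> V}"
      have "lambda_set X N" unfolding lambda_set_def N_def by (intro exI[of _ "{V. openin X V \<and> x \<in> V}"]) auto
      then have "openin X N" using assms(2) by blast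
      moreover have "x \<in> N" using x N_def by auto
      moreover have "N \<subseteq> topspace X - ?S"
      proof
        fix z assume z: "z \<in> N"
        have "le x z" using x z unfolding N_def le_def by auto
        then have "R x z" unfolding R_def using x le_def by blast
        then have "h z = h x" using Eeq h_def by simp
        then show "z \<in> topspace X - ?S" using x z N_def by auto
      qed
      ultimately show "\<exists>T. openin X T \<and> x \<in> T \<and> T \<subseteq> topspace X - ?S" by blast
    qed
    then show "closedin X ?S" by (simp add: closedin_def)
  qed
  then show ?thesis using bounds by blast
qed

end
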